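(* Let $G$ be a $\mathbb{P}$-generic filter over a ground model $V$, and let $(G_k)_{k\in\omega}\in\prod_{k\in\omega}\mathbb{C}_k$ be the generic sequence, i.e. the unique function $g$ on $\omega$ with $g\restriction m\in T$ for all $T\in G$ and $m\in\omega$, $G_k=g(k)$. Then in $V[G]$, $V\cap[0,1]^n\subset\bigcap_{m\in\omega}\bigcup_{k\ge m}G_k$; that is, every point of $[0,1]^n$ lying in $V$ belongs to $G_k$ for infinitely many $k$.
   Context: Fix a positive integer $n$ and real $0<r<n$. For each $k\in\omega$ fix $M_k\in\omega$ with $2^k(\sqrt{n}/M_k)^r<2^{-k}$. $C_k$ is the set of cubes $[\frac{j_0}{M_k},\frac{j_0+1}{M_k}]\times\cdots\times[\frac{j_{n-1}}{M_k},\frac{j_{n-1}+1}{M_k}]$ with $j_i\in\{0,\dots,M_k-1\}$; $\mathbb{C}_k$ is the set of unions of $2^k$ (not necessarily distinct) elements of $C_k$. Norm $\nu$ on $X\subset\mathbb{C}_k$: $\nu(X)\ge0$ always; $\nu(X)\ge1$ iff $\bigcup X=[0,1]^n$; for $j\ge1$, $\nu(X)\ge j+1$ iff for every partition $X=X_0\cup X_1$ some $\nu(X_i)\ge j$; $\nu(X)$ is the largest such $j$. Finite sequences are functions on natural numbers $m=\{0,\dots,m-1\}$, $|t|$ is the length; a tree is a set of finite sequences closed under initial segments; $\mathrm{succ}_T(t)$ is the set of immediate successors of $t$ in $T$, with $\nu(\mathrm{succ}_T(t)):=\nu(\{s(|t|):s\in\mathrm{succ}_T(t)\})$; a branching node is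 $t$ with $|\mathrm{succ}_T(t)|>1$. $\mathbb{P}$ consists of all $T$ with: (1) $T$ a nonempty tree; (2) $t(k)\in\mathbb{C}_k$ for $t\in T$, $k<|t|$; (3) $\mathrm{succ}_T(t)\neq\emptyset$ for all $t\in T$; (4) every node has a branching extension in $T$; (5) for each $K\in\omega$ only finitely many branching nodes $t$ have $\nu(\mathrm{succ}_T(t))\le K$. Ordered by inclusion. *)

theory Defs
  imports "HOL-Analysis.Analysis"
begin

definition unit_cube :: "(real ^ 'n) set" where
  "unit_cube = {x. \<forall>i. 0 \<le> x $ i \<and> x $ i \<le> 1}"

definition grid_cubes :: "nat \<Rightarrow> (real ^ 'n) set set" where
  "grid_cubes M = { {x. \<forall>i. real (j i) / real M \<le> x $ i \<and> x $ i \<le> (real (j i) + 1) / real M}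
                    | j :: 'n \<Rightarrow> nat. \<forall>i. j i < M }"

definition CC :: "(nat \<Rightarrow> nat) \<Rightarrow> nat \<Rightarrow> (real ^ 'n) set set" where
  "CC M k = { \<Union> (c ` {..<(2::nat)^k}) | c. \<forall>i<(2::nat)^k. c i \<in> grid_cubes (M k) }"

text \<open>norm_ge j X  means  nu(X) \<ge> j.\<close>
fun norm_ge :: "nat \<Rightarrow> (real ^ 'n) set set \<Rightarrow> bool" where
  "norm_ge 0 X = True"
| "norm_ge (Suc 0) X = (\<Union> X = unit_cube)"
| "norm_ge (Suc (Suc j)) X =
     (\<forall>X0 X1. X0 \<union> X1 = X \<and> X0 \<inter> X1 = {} \<longrightarrow> norm_ge (Suc j) X0 \<or> norm_ge (Suc j) X1)"

definition norm_le :: "nat \<Rightarrow> (real ^ 'n) set set \<Rightarrow> bool" where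
  "norm_le K X \<longleftrightarrow> \<not> norm_ge (Suc K) X"

definition succ_tree :: "'a list set \<Rightarrow> 'a list \<Rightarrow> 'a list set" where
  "succ_tree T t = {s \<in> T. length s = Suc (length t) \<and> take (length t) s = t}"

definition succ_vals :: "'a list set \<Rightarrow> 'a list \<Rightarrow> 'a set" where
  "succ_vals T t = (\<lambda>s. s ! length t) ` succ_tree T t"

definition branching :: "'a list set \<Rightarrow> 'a list \<Rightarrow> bool" where
  "branching T t \<longleftrightarrow> card (succ_tree T t) > 1 \<or> infinite (succ_tree T t)"

text \<open>The forcing poset P (ordered by inclusion).\<close>
definition PP :: "(nat \<Rightarrow> nat) \<Rightarrow> (real ^ 'n) set list set set" where
  "PP M = {T. T \<noteq> {}
      \<and> (\<forall>t\<in>T. \<forall>m\<le>length t. take m t \<in> T)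
      \<and> (\<forall>t\<in>T. \<forall>k<length t. t ! k \<in> CC M k)
      \<and> (\<forall>t\<in>T. succ_tree T t \<noteq> {})
      \<and> (\<forall>t\<in>T. \<exists>s\<in>T. length t \<le> length s \<and> take (length t) s = t \<and> branching T s)
      \<and> (\<forall>K. finite {t\<in>T. branching T t \<and> norm_le K (succ_vals T t)})}"

end

theory Submission
  imports Defs
begin

lemma nodes_exist:
  assumes "T \<in> PP M"
  shows "\<exists>u\<in>T. length u = n"
proof (induction n)
  case 0
  from assms obtain t where "t \<in> T" unfolding PP_def by auto
  with assms have "take 0 t \<in> T" unfolding PP_def by blast
  then show ?case by auto
next
  case (Suc n)
  then obtain u where u: "u \<in> T" "length u = n" by auto
  with assms have "succ_tree T u \<noteq> {}" unfolding PP_def by blast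
  then obtain v where "v \<in> succ_tree T u" by auto
  then show ?case using u unfolding succ_tree_def by auto
qed

lemma take_ext:
  assumes "take (length w) v = w" "length s \<le> length w" "take (length s) w = s"
  shows "take (length s) v = s"
  by (metis assms min.absorb1 take_take)

theorem lemma4p8:
  fixes r :: real and M :: "nat \<Rightarrow> nat"
  assumes "0 < r" and "r < real CARD('n)"
    and "\<And>k. M k > 0"
    and "\<And>k. 2 ^ k * (sqrt (real CARD('n)) / real (M k)) powr r < 2 powi (- int k)"
  shows "\<forall>x \<in> (unit_cube :: (real ^ 'n) set). \<forall>m::nat. \<forall>T \<in> PP M.
           \<exists>T' \<in> PP M. T' \<subseteq> T \<and>
             (\<forall>g :: nat \<Rightarrow> (real ^ 'n) set. (\<forall>j. map g [0..<j] \<in> T') \<longrightarrow> (\<exists>k\<ge>m. x \<in> g k))"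
proof (intro ballI allI)
  fix x :: "real ^ 'n" and m :: nat and T :: "(real ^ 'n) set list set"
  assume x: "x \<in> unit_cube" and T: "T \<in> PP M"
  have P1: "T \<noteq> {}"
    and P2: "\<forall>t\<in>T. \<forall>m\<le>length t. take m t \<in> T"
    and P3: "\<forall>t\<in>T. \<forall>k<length t. t ! k \<in> CC M k"
    and P4: "\<forall>t\<in>T. succ_tree T t \<noteq> {}"
    and P5: "\<forall>t\<in>T. \<exists>s\<in>T. length t \<le> length s \<and> take (length t) s = t \<and> branching T s"
    and P6: "\<forall>K. finite {t\<in>T. branching T t \<and> norm_le K (succ_vals T t)}"
    using T unfolding PP_def by auto
  define F where "F = {t\<in>T. branching T t \<and> norm_le 0 (succ_vals T t)}"
  have finF: "finite F" using P6 unfolding F_def by blast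
  define L where "L = Suc (m + Max (insert 0 (length ` F)))"
  have FL: "length t < L" if "t \<in> F" for t
  proof -
    have "length t \<le> Max (insert 0 (length ` F))" using finF that by (intro Max_ge) auto
    then show ?thesis unfolding L_def by simp
  qed
  obtain u where u: "u \<in> T" "length u = L" using nodes_exist[OF T] by blast
  obtain t where t: "t \<in> T" "length u \<le> length t" "take (length u) t = u" "branching T t"
    using P5 u(1) by blast
  have "t \<notin> F"
  proof
    assume "t \<in> F"
    then have "length t < L" by (rule FL)
    with t u show False by simp
  qed
  then have "\<Union> (succ_vals T t) = unit_cube" using t unfolding F_def norm_le_def by simp
  with x obtain v where "v \<in> succ_vals T t" "x \<in> v" by blast
  then obtain s where s: "s \<in> succ_tree T t" "x \<in> s ! length t" unfolding succ_vals_def by auto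
  have sT: "s \<in> T" and slen: "length s = Suc (length t)" and stake: "take (length t) s = t"
    using s(1) unfolding succ_tree_def by auto
  have mt: "m \<le> length t" using t u unfolding L_def by simp
  define T' where "T' = {w\<in>T. take (length w) s = w \<or> take (length s) w = s}"
  have T'T: "T' \<subseteq> T" unfolding T'_def by auto
  have sT': "s \<in> T'" using sT unfolding T'_def by auto
  have A: "take (length s) w = s" if "w \<in> T'" "length s \<le> length w" for w
  proof -
    have "take (length w) s = w \<or> take (length s) w = s" using that(1) unfolding T'_def by auto
    moreover have "take (length w) s = s" using that(2) by simp
    ultimately show ?thesis by auto
  qed
  have C: "v \<in> T'" if "w \<in> T'" "length s \<le> length w" "v \<in> T" "take (length w) v = w" for w v
    using A[OF that(1,2)] that take_ext[of w v s] unfolding T'_def by auto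
  have B: "succ_tree T' w = succ_tree T w" if "w \<in> T'" "length s \<le> length w" for w
    using C[OF that] T'T unfolding succ_tree_def by auto
  have E: "\<exists>w\<in>T'. length u \<le> length w \<and> take (length u) w = u \<and> length s \<le> length w"
    if "u \<in> T'" for u
  proof (cases "length u < length s")
    case True
    have d: "take (length u) s = u \<or> take (length s) u = s" using that unfolding T'_def by auto
    have "length (take (length s) u) \<noteq> length s" using True by simp
    then have "take (length u) s = u" using d by metis
    then show ?thesis using True sT' by (intro bexI[where x=s]) auto
  next
    case False
    then show ?thesis using that by (intro bexI[where x=u]) auto
  qed
  have "T' \<in> PP M"
    unfolding PP_def
  proof (intro CollectI conjI ballI allI impI)
    show "T' \<noteq> {}" using sT' by auto
  next
    fix w k assume w: "w \<in> T'" and k: "k \<le> length w"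
    have "take k w \<in> T" using P2 w k T'T by auto
    moreover have "take (length (take k w)) s = take k w \<or> take (length s) (take k w) = s"
    proof (cases "take (length w) s = w")
      case True
      from True have "take k (take (length w) s) = take k w" by simp
      then have "take k s = take k w" using k by (simp add: min_def)
      moreover have "length (take k w) = k" using k by simp
      ultimately show ?thesis by (intro disjI1) simp
    next
      case False
      then have ws: "take (length s) w = s" using w unfolding T'_def by auto
      show ?thesis
      proof (cases "k \<le> length s")
        case True
        from ws have "take k (take (length s) w) = take k s" by simp
        then have "take k s = take k w" using True by (simp add: min_def)
        moreover have "length (take k w) = k" using k by simp
      ultimately show ?thesis by (intro disjI1) simp
      next
        case False
        then show ?thesis using ws k by (simp add: min_def)
      qed
    qed
    ultimately show "take k w \<in> T'" unfolding T'_def by auto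
  next
    fix w k assume "w \<in> T'" "k < length w"
    then show "w ! k \<in> CC M k" using P3 T'T by auto
  next
    fix w assume w: "w \<in> T'"
    obtain w' where w': "w' \<in> T'" "length w \<le> length w'" "take (length w) w' = w" "length s \<le> length w'"
      using E[OF w] by blast
    show "succ_tree T' w \<noteq> {}"
    proof (cases "length s \<le> length w")
      case True
      then show ?thesis using B[OF w True] P4 w T'T by auto
    next
      case False
      have d: "take (length w) s = w \<or> take (length s) w = s" using w unfolding T'_def by auto
      have "length (take (length s) w) \<noteq> length s" using False by simp
      then have tw: "take (length w) s = w" using d by metis
      define v where "v = take (Suc (length w)) s"
      have lv: "length v = Suc (length w)" using False unfolding v_def by simp
      have "v \<in> T" using P2 sT False unfolding v_def by simp
      moreover have "take (length v) s = v" using lv unfolding v_def by simp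
      ultimately have "v \<in> T'" unfolding T'_def by blast
      moreover have "take (length w) v = w" using tw unfolding v_def by simp
      ultimately have "v \<in> succ_tree T' w" using lv unfolding succ_tree_def by simp
      then show ?thesis by auto
    qed
  next
    fix w assume w: "w \<in> T'"
    obtain w' where w': "w' \<in> T'" "length w \<le> length w'" "take (length w) w' = w" "length s \<le> length w'"
      using E[OF w] by blast
    obtain v where v: "v \<in> T" "length w' \<le> length v" "take (length w') v = w'" "branching T v"
      using P5 w' T'T by blast
    have vT': "v \<in> T'" using C[OF w'(1) w'(4) v(1) v(3)] .
    have "branching T' v" using B[OF vT'] v(4) w'(4) v(2) unfolding branching_def by simp
    moreover have "take (length w) v = w" using v w' by (metis min.absorb1 take_take)
    ultimately show "\<exists>v\<in>T'. length w \<le> length v \<and> take (length w) v = w \<and> branching T' v"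
      using vT' v w' by (intro bexI[where x=v]) auto
  next
    fix K
    have "{w\<in>T'. branching T' w \<and> norm_le K (succ_vals T' w)}
          \<subseteq> {w\<in>T. branching T w \<and> norm_le K (succ_vals T w)} \<union> (\<lambda>i. take i s) ` {..length s}"
    proof
      fix w assume w: "w \<in> {w\<in>T'. branching T' w \<and> norm_le K (succ_vals T' w)}"
      show "w \<in> {w\<in>T. branching T w \<and> norm_le K (succ_vals T w)} \<union> (\<lambda>i. take i s) ` {..length s}"
      proof (cases "length s \<le> length w")
        case True
        have wT': "w \<in> T'" and br: "branching T' w" and nl: "norm_le K (succ_vals T' w)"
          using w by auto
        have eq: "succ_tree T' w = succ_tree T w" using B[OF wT' True] .
        have "branching T w" using br eq unfolding branching_def by simp
        moreover have "norm_le K (succ_vals T w)" using nl eq unfolding succ_vals_def by simp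
        moreover have "w \<in> T" using wT' T'T by auto
        ultimately show ?thesis by blast
      next
        case False
        have d: "take (length w) s = w \<or> take (length s) w = s" using w unfolding T'_def by auto
        have "length (take (length s) w) \<noteq> length s" using False by simp
        then have tw: "take (length w) s = w" using d by metis
        have "length w \<in> {..length s}" using False by simp
        then have "w \<in> (\<lambda>i. take i s) ` {..length s}" using tw by (intro image_eqI[where x="length w"]) auto
        then show ?thesis by blast
      qed
    qed
    then show "finite {w\<in>T'. branching T' w \<and> norm_le K (succ_vals T' w)}"
      using P6 by (meson finite_UnI finite_atMost finite_imageI finite_subset)
  qed
  moreover have "\<exists>k\<ge>m. x \<in> g k" if g: "\<forall>j. map g [0..<j] \<in> T'" for g
  proof -
    have "map g [0..<length s] \<in> T'" using g by blast
    then have "take (length s) (map g [0..<length s]) = s" using A by fastforce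
    then have "map g [0..<length s] = s" by simp
    then have "g (length t) = s ! length t" using slen
      by (metis add_0 diff_zero lessI nth_map_upt)
    then show ?thesis using s(2) mt by auto
  qed
  ultimately show "\<exists>T'\<in>PP M. T' \<subseteq> T \<and> (\<forall>g. (\<forall>j. map g [0..<j] \<in> T') \<longrightarrow> (\<exists>k\<ge>m. x \<in> g k))"
    using T'T by blast
qed

end
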